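(* Let $k$ be a field, $A,B$ abelian groups, $R$ an $A$-graded and $S$ a $B$-graded finite-dimensional Frobenius $k$-algebra with forms $\langle-,-\rangle_R$, $\langle-,-\rangle_S$ and Nakayama automorphisms $\nu_R,\nu_S$, and $t:A\otimes B\to k^\times$ a bicharacter. Suppose there exist $\sigma_R\in A$, $\sigma_S\in B$ such that for homogeneous $r,r'\in R$, $\langle r,r'\rangle_R\ne0$ implies $|r|+|r'|+\sigma_R=0$, and for homogeneous $s,s'\in S$, $\langle s,s'\rangle_S\neq0$ implies $|s|+|s'|+\sigma_S=0$. Then: (1) $\nu_R$ and $\nu_S$ preserve the gradings; (2) the map $R\otimes^tS\to D(R\otimes^tS)[(\sigma_R,\sigma_S)]$, $x\mapsto\langle x,-\rangle$, is graded (of degree zero), where $\langle-,-\rangle$ is the form $\langle r\otimes s,r'\otimes s'\rangle=t(|r'|,|s|)\langle r,r'\rangle_R\langle s,s'\rangle_S$ on $R\otimes^tS$; equivalently, for homogeneous $r,a\in R$, $s,b\in S$, $\langle r\otimes s,a\otimes b\rangle\neq0$ implies $(|a|,|b|)=(-|r|-\sigma_R,-|s|-\sigma_S)$.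
   Context: $R\otimes^tS$ is $R\otimes S$ with product $(r\otimes s)(r'\otimes s')=t(|r'|,|s|)rr'\otimes ss'$; it is $A\oplus B$-graded. The Nakayama automorphism $\nu$ of a Frobenius algebra is defined by $\langle a,x\rangle=\langle x,\nu(a)\rangle$ for all $x$. For a $G$-graded space $V$, $D(V)=\operatorname{Hom}_k(V,k)$ is graded by $D(V)_g=\{\phi:\phi(v)=0$ for $v\notin V^{-g}\}$, and $V[\sigma]^g=V^{g+\sigma}$. *)

theory Defs
  imports Complex_Main
begin

definition fd_algebra :: "('k::field \<Rightarrow> 'r::ring_1 \<Rightarrow> 'r) \<Rightarrow> bool" where
  "fd_algebra sc \<longleftrightarrow> vector_space sc
     \<and> (\<forall>c x y. sc c (x * y) = sc c x * y \<and> sc c (x * y) = x * sc c y)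
     \<and> (\<exists>B. finite B \<and> module.span sc B = UNIV)"

definition graded_algebra ::
  "('k::field \<Rightarrow> 'r::ring_1 \<Rightarrow> 'r) \<Rightarrow> ('g::ab_group_add \<Rightarrow> 'r set) \<Rightarrow> bool" where
  "graded_algebra sc Gr \<longleftrightarrow>
     (\<forall>g. module.subspace sc (Gr g))
     \<and> (\<forall>g h x y. x \<in> Gr g \<longrightarrow> y \<in> Gr h \<longrightarrow> x * y \<in> Gr (g + h))
     \<and> 1 \<in> Gr 0
     \<and> (\<forall>x. \<exists>!f. finite {g. f g \<noteq> 0} \<and> (\<forall>g. f g \<in> Gr g)
                  \<and> x = (\<Sum>g\<in>{g. f g \<noteq> 0}. f g))"

definition frobenius_form ::
  "('k::field \<Rightarrow> 'r::ring_1 \<Rightarrow> 'r) \<Rightarrow> ('r \<Rightarrow> 'r \<Rightarrow> 'k) \<Rightarrow> bool" where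
  "frobenius_form sc form \<longleftrightarrow>
     (\<forall>x y z. form (x + y) z = form x z + form y z \<and> form x (y + z) = form x y + form x z)
     \<and> (\<forall>c x y. form (sc c x) y = c * form x y \<and> form x (sc c y) = c * form x y)
     \<and> (\<forall>x y z. form (x * y) z = form x (y * z))
     \<and> (\<forall>x. (\<forall>y. form x y = 0) \<longrightarrow> x = 0)
     \<and> (\<forall>y. (\<forall>x. form x y = 0) \<longrightarrow> y = 0)"

definition frobenius_algebra ::
  "('k::field \<Rightarrow> 'r::ring_1 \<Rightarrow> 'r) \<Rightarrow> ('r \<Rightarrow> 'r \<Rightarrow> 'k) \<Rightarrow> bool" where
  "frobenius_algebra sc form \<longleftrightarrow> fd_algebra sc \<and> frobenius_form sc form"

definition is_nakayama :: "('r \<Rightarrow> 'r \<Rightarrow> 'k) \<Rightarrow> ('r \<Rightarrow> 'r) \<Rightarrow> bool" where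
  "is_nakayama form nu \<longleftrightarrow> (\<forall>a x. form a x = form x (nu a))"

text \<open>A bicharacter t : A x B \<rightarrow> k^\<times> (equivalently a homomorphism A \<otimes> B \<rightarrow> k^\<times>).\<close>
definition bicharacter :: "('a::ab_group_add \<Rightarrow> 'b::ab_group_add \<Rightarrow> 'k::field) \<Rightarrow> bool" where
  "bicharacter t \<longleftrightarrow> (\<forall>a b. t a b \<noteq> 0)
     \<and> (\<forall>a a' b. t (a + a') b = t a b * t a' b)
     \<and> (\<forall>a b b'. t a (b + b') = t a b * t a b')"

text \<open>The form on R \<otimes>^t S evaluated on pure tensors r \<otimes> s and r' \<otimes> s' with
  r' homogeneous of degree dr' and s homogeneous of degree ds:
  <r\<otimes>s, r'\<otimes>s'> = t(|r'|,|s|) <r,r'>_R <s,s'>_S.\<close>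
definition tensor_form ::
  "('a \<Rightarrow> 'b \<Rightarrow> 'k::field) \<Rightarrow> ('r \<Rightarrow> 'r \<Rightarrow> 'k) \<Rightarrow> ('s \<Rightarrow> 's \<Rightarrow> 'k)
    \<Rightarrow> 'r \<Rightarrow> 's \<Rightarrow> 'b \<Rightarrow> 'r \<Rightarrow> 'a \<Rightarrow> 's \<Rightarrow> 'k" where
  "tensor_form t formR formS r s ds r' dr' s' = t dr' ds * formR r r' * formS s s'"

end

theory Submission
  imports Defs
begin

lemma form_sum_left:
  fixes form :: "'r::ring_1 \<Rightarrow> 'r \<Rightarrow> 'k::field"
  assumes add: "\<And>x y z. form (x + y) z = form x z + form y z"
  shows "finite F \<Longrightarrow> form (sum f F) z = (\<Sum>g\<in>F. form (f g) z)"
proof (induction F rule: finite_induct)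
  case empty
  have "form 0 z + 0 = form 0 z + form 0 z" using add[of 0 0 z] by simp
  then show ?case by (metis add_left_cancel sum.empty)
next
  case (insert x F)
  then show ?case by (simp add: add)
qed

lemma form_sum_right:
  fixes form :: "'r::ring_1 \<Rightarrow> 'r \<Rightarrow> 'k::field"
  assumes add: "\<And>x y z. form x (y + z) = form x y + form x z"
  shows "finite F \<Longrightarrow> form z (sum f F) = (\<Sum>g\<in>F. form z (f g))"
proof (induction F rule: finite_induct)
  case empty
  have "form z 0 + 0 = form z 0 + form z 0" using add[of z 0 0] by simp
  then show ?case by (metis add_left_cancel sum.empty)
next
  case (insert x F)
  then show ?case by (simp add: add)
qed

lemma nak_graded:
  fixes sc :: "'k::field \<Rightarrow> 'r::ring_1 \<Rightarrow> 'r"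
    and G :: "'a::ab_group_add \<Rightarrow> 'r set"
  assumes frob: "frobenius_algebra sc form"
    and gr: "graded_algebra sc G"
    and nak: "is_nakayama form nu"
    and deg: "\<And>g g' r r'. r \<in> G g \<Longrightarrow> r' \<in> G g' \<Longrightarrow> form r r' \<noteq> 0
                 \<Longrightarrow> g + g' + \<sigma> = 0"
    and x: "x \<in> G g"
  shows "nu x \<in> G g"
proof -
  have fr: "frobenius_form sc form" using frob by (simp add: frobenius_algebra_def)
  have addL: "\<And>x y z. form (x + y) z = form x z + form y z"
    using fr unfolding frobenius_form_def by simp
  have addR: "\<And>x y z. form x (y + z) = form x y + form x z"
    using fr unfolding frobenius_form_def by simp
  have nd: "\<And>y. (\<forall>x. form x y = 0) \<Longrightarrow> y = 0"
    using fr unfolding frobenius_form_def by simp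
  have sub: "0 \<in> G g" for g
  proof -
    have "module.subspace sc (G g)" using gr by (simp add: graded_algebra_def)
    moreover have "vector_space sc" using frob by (simp add: frobenius_algebra_def fd_algebra_def)
    then have "module sc" by (simp add: vector_space_def module_def)
    ultimately show ?thesis using module.subspace_0 by blast
  qed
  have dec: "\<And>x. \<exists>f. finite {g. f g \<noteq> 0} \<and> (\<forall>g. f g \<in> G g)
                  \<and> x = (\<Sum>g\<in>{g. f g \<noteq> 0}. f g)"
  proof -
    fix x
    have "\<exists>!f. finite {g. f g \<noteq> 0} \<and> (\<forall>g. f g \<in> G g)
                  \<and> x = (\<Sum>g\<in>{g. f g \<noteq> 0}. f g)"
      using gr[unfolded graded_algebra_def, THEN conjunct2, THEN conjunct2, THEN conjunct2, THEN spec] .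
    then show "\<exists>f. finite {g. f g \<noteq> 0} \<and> (\<forall>g. f g \<in> G g)
                  \<and> x = (\<Sum>g\<in>{g. f g \<noteq> 0}. f g)" by (rule ex1_implies_ex)
  qed
  have B: "v = 0" if hv: "\<And>g' y. y \<in> G g' \<Longrightarrow> form y v = 0" for v
  proof (rule nd, intro allI)
    fix y
    obtain f where f: "finite {g. f g \<noteq> 0}" "\<forall>g. f g \<in> G g"
      "y = (\<Sum>g\<in>{g. f g \<noteq> 0}. f g)" using dec by blast
    have "form y v = (\<Sum>g\<in>{g. f g \<noteq> 0}. form (f g) v)"
      using form_sum_left[of form, OF addL f(1)] f(3) by simp
    also have "\<dots> = 0" by (rule sum.neutral) (use hv f(2) in blast)
    finally show "form y v = 0" .
  qed
  obtain f where f: "finite {g. f g \<noteq> 0}" "\<forall>g. f g \<in> G g"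
      "nu x = (\<Sum>g\<in>{g. f g \<noteq> 0}. f g)" using dec by blast
  define F where "F = {g. f g \<noteq> 0}"
  have fin: "finite F" using f F_def by simp
  have "f h0 = 0" if h0: "h0 \<noteq> g" for h0
  proof (rule B)
    fix g' y assume y: "y \<in> G g'"
    show "form y (f h0) = 0"
    proof (cases "g' + h0 + \<sigma> = 0")
      case False
      then show ?thesis using deg[OF y] f(2) by blast
    next
      case True
      have "form y (nu x) = (\<Sum>h\<in>F. form y (f h))"
        using form_sum_right[of form, OF addR fin] f(3) F_def by simp
      also have "\<dots> = (\<Sum>h\<in>F. if h = h0 then form y (f h) else 0)"
      proof (rule sum.cong)
        fix h assume "h \<in> F"
        show "form y (f h) = (if h = h0 then form y (f h) else 0)"
        proof (cases "h = h0")
          case False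
          have eq: "h = (g' + h + \<sigma>) - (g' + h0 + \<sigma>) + h0" by (simp add: algebra_simps)
          have "g' + h + \<sigma> \<noteq> 0"
          proof
            assume z: "g' + h + \<sigma> = 0"
            have "h = 0 - 0 + h0" using eq z True by (simp only:)
            then show False using False by simp
          qed
          then show ?thesis using deg[OF y] f(2) False by auto
        qed simp
      qed simp
      also have "\<dots> = (if h0 \<in> F then form y (f h0) else 0)"
        using fin by (simp add: sum.delta)
      also have "\<dots> = form y (f h0)"
        using F_def form_sum_right[of form, OF addR, of "{}" y] by auto
      finally have e: "form y (nu x) = form y (f h0)" .
      have eq: "g = (g + g' + \<sigma>) - (g' + h0 + \<sigma>) + h0" by (simp add: algebra_simps)
      have "g + g' + \<sigma> \<noteq> 0"
      proof
        assume z: "g + g' + \<sigma> = 0"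
        have "g = 0 - 0 + h0" using eq z True by (simp only:)
        then show False using h0 by simp
      qed
      then have "form x y = 0" using deg[OF x y] by blast
      then show ?thesis using e nak unfolding is_nakayama_def by metis
    qed
  qed
  then have "F \<subseteq> {g}" using F_def by auto
  then have "F = {} \<or> F = {g}" by blast
  then show ?thesis
  proof
    assume "F = {}" then show ?thesis using f(3) F_def sub by simp
  next
    assume "F = {g}" then show ?thesis using f F_def by simp
  qed
qed

theorem mainTheorem4:
  fixes scR :: "'k::field \<Rightarrow> 'r::ring_1 \<Rightarrow> 'r"
    and scS :: "'k \<Rightarrow> 's::ring_1 \<Rightarrow> 's"
    and RG :: "'a::ab_group_add \<Rightarrow> 'r set"
    and SG :: "'b::ab_group_add \<Rightarrow> 's set"
    and formR :: "'r \<Rightarrow> 'r \<Rightarrow> 'k"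
    and formS :: "'s \<Rightarrow> 's \<Rightarrow> 'k"
    and nuR :: "'r \<Rightarrow> 'r"
    and nuS :: "'s \<Rightarrow> 's"
    and t :: "'a \<Rightarrow> 'b \<Rightarrow> 'k"
    and \<sigma>R :: 'a and \<sigma>S :: 'b
  assumes frobR: "frobenius_algebra scR formR"
    and gradedR: "graded_algebra scR RG"
    and frobS: "frobenius_algebra scS formS"
    and gradedS: "graded_algebra scS SG"
    and nakR: "is_nakayama formR nuR"
    and nakS: "is_nakayama formS nuS"
    and bichar: "bicharacter t"
    and degR: "\<And>g g' r r'. r \<in> RG g \<Longrightarrow> r' \<in> RG g' \<Longrightarrow> formR r r' \<noteq> 0
                 \<Longrightarrow> g + g' + \<sigma>R = 0"
    and degS: "\<And>h h' s s'. s \<in> SG h \<Longrightarrow> s' \<in> SG h' \<Longrightarrow> formS s s' \<noteq> 0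
                 \<Longrightarrow> h + h' + \<sigma>S = 0"
  shows "(\<forall>g x. x \<in> RG g \<longrightarrow> nuR x \<in> RG g)
       \<and> (\<forall>h y. y \<in> SG h \<longrightarrow> nuS y \<in> SG h)
       \<and> (\<forall>g h g' h' r s a b. r \<in> RG g \<longrightarrow> s \<in> SG h \<longrightarrow> a \<in> RG g' \<longrightarrow> b \<in> SG h'
            \<longrightarrow> tensor_form t formR formS r s h a g' b \<noteq> 0
            \<longrightarrow> (g', h') = (- g - \<sigma>R, - h - \<sigma>S))"
proof (intro conjI allI impI)
  fix g x assume "x \<in> RG g"
  then show "nuR x \<in> RG g" by (rule nak_graded[OF frobR gradedR nakR, rotated]) (rule degR; assumption)
next
  fix h y assume "y \<in> SG h"
  then show "nuS y \<in> SG h" by (rule nak_graded[OF frobS gradedS nakS, rotated]) (rule degS; assumption)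
next
  fix g h g' h' r s a b
  assume r: "r \<in> RG g" and s: "s \<in> SG h" and a: "a \<in> RG g'" and b: "b \<in> SG h'"
    and nz: "tensor_form t formR formS r s h a g' b \<noteq> 0"
  have "formR r a \<noteq> 0" "formS s b \<noteq> 0" using nz unfolding tensor_form_def by auto
  then have "g + g' + \<sigma>R = 0" "h + h' + \<sigma>S = 0" using degR[OF r a] degS[OF s b] by auto
  moreover have "g' = (g + g' + \<sigma>R) - g - \<sigma>R" "h' = (h + h' + \<sigma>S) - h - \<sigma>S"
    by (simp_all add: algebra_simps)
  ultimately have "g' = - g - \<sigma>R" "h' = - h - \<sigma>S" by simp_all
  then show "(g', h') = (- g - \<sigma>R, - h - \<sigma>S)" by simp
qed

end
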